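(* Let $\mathcal P\subset\mathbb R^n$ be an $n$-dimensional convex polytope and consider $\dot x=Ax+a+Bu$, $x\in\mathcal P$, with $\operatorname{rank}(B)=n-1$, $(A,B)$ controllable and $\operatorname{int}\mathcal P\cap\mathcal O=\emptyset$. Let $z\in\mathcal P$. If $\mathcal B_z\cap\mathcal P\subset\mathcal O$, then $\mathcal B_z\cap\mathcal P$ and $\mathcal P\setminus\mathcal B_z$ are $\mathcal P$-invariant.
   Context: $\mathcal B=\operatorname{Im}(B)$, $\mathcal O=\{x:Ax+a\in\mathcal B\}$; $\beta$ is the unit normal to $\mathcal B$ with $\beta^T(Ax+a)\le0$ on $\mathcal P$; $\mathcal B_z=\{x\in\mathbb R^n:\beta^Tx=\beta^Tz\}$. A set $\mathcal A\subseteq\mathcal P$ is $\mathcal P$-invariant if for every $x_0\in\mathcal A$ and every piecewise continuous control $u$, every trajectory $\phi^u_t(x_0)$ that lies in $\mathcal P$ on an interval $[0,T]$ ($T<\infty$) or $[0,\infty)$ lies in $\mathcal A$ on the same interval. *)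

theory Defs
  imports "HOL-Analysis.Analysis"
begin

primrec matpow :: "real^'n^'n \<Rightarrow> nat \<Rightarrow> real^'n^'n" where
  "matpow A 0 = mat 1"
| "matpow A (Suc k) = A ** matpow A k"

text \<open>Kalman controllability: the controllability matrix [B, AB, ..., A^(n-1) B]
  has rank n, i.e. its columns span a space of dimension n.\<close>
definition controllable :: "real^'n^'n \<Rightarrow> real^'m^'n \<Rightarrow> bool" where
  "controllable A B \<longleftrightarrow>
     dim (\<Union>k\<in>{..<CARD('n)}. columns (matpow A k ** B)) = CARD('n)"

text \<open>Piecewise continuity on [0,T]: a finite partition 0 = t0 < ... < tk = T such
  that on each open piece u agrees with a function continuous on the closed piece
  (so one-sided limits exist at the partition points).\<close>
definition pc_on_interval :: "(real \<Rightarrow> 'a::topological_space) \<Rightarrow> real \<Rightarrow> bool" where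
  "pc_on_interval u T \<longleftrightarrow>
     (\<exists>S. finite S \<and> 0 \<in> S \<and> T \<in> S \<and> S \<subseteq> {0..T} \<and>
        (\<forall>p\<in>S. \<forall>q\<in>S. p < q \<and> {p<..<q} \<inter> S = {} \<longrightarrow>
           (\<exists>g. continuous_on {p..q} g \<and> (\<forall>t\<in>{p<..<q}. u t = g t))))"

definition piecewise_continuous :: "(real \<Rightarrow> 'a::topological_space) \<Rightarrow> bool" where
  "piecewise_continuous u \<longleftrightarrow> (\<forall>T\<ge>0. pc_on_interval u T)"

text \<open>x is the trajectory of xdot = A x + a + B u from x0 on the interval I (containing 0),
  as a (Caratheodory) solution of the integral equation.\<close>
definition is_traj ::
  "real^'n^'n \<Rightarrow> real^'n \<Rightarrow> real^'m^'n \<Rightarrow> (real \<Rightarrow> real^'m) \<Rightarrow> real^'n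
     \<Rightarrow> (real \<Rightarrow> real^'n) \<Rightarrow> real set \<Rightarrow> bool" where
  "is_traj A a B u x0 x I \<longleftrightarrow>
     x 0 = x0 \<and>
     (\<forall>t\<in>I. ((\<lambda>s. A *v x s + a + B *v u s) has_integral (x t - x0)) {0..t})"

definition P_invariant ::
  "real^'n^'n \<Rightarrow> real^'n \<Rightarrow> real^'m^'n \<Rightarrow> (real^'n) set \<Rightarrow> (real^'n) set \<Rightarrow> bool" where
  "P_invariant A a B P Q \<longleftrightarrow> Q \<subseteq> P \<and>
     (\<forall>x0\<in>Q. \<forall>u. piecewise_continuous u \<longrightarrow>
        (\<forall>x T. 0 \<le> T \<and> is_traj A a B u x0 x {0..T} \<and> (\<forall>t\<in>{0..T}. x t \<in> P)
               \<longrightarrow> (\<forall>t\<in>{0..T}. x t \<in> Q)) \<and>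
        (\<forall>x. is_traj A a B u x0 x {0..} \<and> (\<forall>t\<in>{0..}. x t \<in> P)
               \<longrightarrow> (\<forall>t\<in>{0..}. x t \<in> Q)))"

end

theory Submission imports Defs begin

lemma memI:
  assumes I: "\<forall>t\<in>I. 0 \<le> t \<and> {0..t} \<subseteq> I" and "t \<in> I" "0 \<le> s" "s \<le> t"
  shows "s \<in> I"
proof -
  have "{0..t} \<subseteq> I" using I assms(2) by blast
  moreover have "s \<in> {0..t}" using assms by simp
  ultimately show ?thesis by blast
qed

lemma step_int:
  fixes g \<phi> :: "real \<Rightarrow> real"
  assumes I: "\<forall>t\<in>I. 0 \<le> t \<and> {0..t} \<subseteq> I"
    and int: "\<forall>t\<in>I. (\<phi> has_integral (g t - g 0)) {0..t}"
    and t: "0 \<le> t1" "t1 \<le> t2" "t2 \<in> I"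
  shows "(\<phi> has_integral (g t2 - g t1)) {t1..t2}"
proof -
  have t1I: "t1 \<in> I" using memI[OF I t(3) t(1,2)] .
  have i2: "(\<phi> has_integral (g t2 - g 0)) {0..t2}" and i1: "(\<phi> has_integral (g t1 - g 0)) {0..t1}"
    using int t t1I by auto
  have "\<phi> integrable_on {t1..t2}"
    using i2 integrable_subinterval_real[of \<phi> 0 t2 t1 t2] t unfolding integrable_on_def by auto
  then obtain j where j: "(\<phi> has_integral j) {t1..t2}" by (auto simp: integrable_on_def)
  have "(\<phi> has_integral (g t1 - g 0 + j)) {0..t2}"
    using has_integral_combine[OF t(1,2) i1 j] .
  then have "g t1 - g 0 + j = g t2 - g 0" using i2 has_integral_unique by blast
  then have "j = g t2 - g t1" by simp
  then show ?thesis using j by simp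
qed

lemma zero_pres:
  fixes g \<phi> :: "real \<Rightarrow> real"
  assumes I: "\<forall>t\<in>I. 0 \<le> t \<and> {0..t} \<subseteq> I"
    and int: "\<forall>t\<in>I. (\<phi> has_integral (g t - g 0)) {0..t}"
    and g0: "g 0 = 0"
    and bnd: "\<forall>s\<in>I. 0 \<le> \<phi> s \<and> \<phi> s \<le> K * g s" and K: "K \<ge> 0"
  shows "\<forall>t\<in>I. g t = 0"
proof -
  define \<delta> where "\<delta> = 1 / (2*K + 2)"
  have \<delta>: "\<delta> > 0" "K * \<delta> \<le> 1/2" using K by (auto simp: \<delta>_def field_simps)
  have mono: "g t1 \<le> g t2" if "0 \<le> t1" "t1 \<le> t2" "t2 \<in> I" for t1 t2
  proof -
    have h: "(\<phi> has_integral (g t2 - g t1)) {t1..t2}" using step_int[OF I int that] .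
    have "0 \<le> g t2 - g t1"
      by (rule has_integral_nonneg[OF h]) (use bnd memI[OF I] that in \<open>auto simp: Ball_def\<close>)
    then show ?thesis by simp
  qed
  have key: "g t2 = 0" if "0 \<le> t1" "t1 \<le> t2" "t2 \<in> I" "g t1 = 0" "t2 - t1 \<le> \<delta>" for t1 t2
  proof -
    have h: "(\<phi> has_integral (g t2 - g t1)) {t1..t2}" using step_int[OF I int that(1-3)] .
    have c: "((\<lambda>s. K * g t2) has_integral ((t2 - t1) * (K * g t2))) {t1..t2}" using has_integral_const_real[of "K * g t2" t1 t2] that by simp
    have "g t2 - g t1 \<le> (t2 - t1) * (K * g t2)"
    proof (rule has_integral_le[OF h c])
      fix s assume s: "s \<in> {t1..t2}"
      then have "s \<in> I" using memI[OF I, of t2 s] that by auto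
      then have "\<phi> s \<le> K * g s" using bnd by auto
      also have "\<dots> \<le> K * g t2" using mono[of s t2] s that K by (auto intro: mult_left_mono)
      finally show "\<phi> s \<le> K * g t2" .
    qed
    then have le: "g t2 \<le> (t2 - t1) * K * g t2" using that by simp
    have nn: "0 \<le> g t2" using mono[of t1 t2] that by simp
    have "(t2 - t1) * K * g t2 \<le> \<delta> * K * g t2"
      using that K nn by (intro mult_right_mono) auto
    also have "\<dots> \<le> 1/2 * g t2" using \<delta> nn by (intro mult_right_mono) (auto simp: mult.commute)
    finally show ?thesis using le nn by linarith
  qed
  have ind: "\<forall>t\<in>I. t \<le> real n * \<delta> \<longrightarrow> g t = 0" for n
  proof (induction n)
    case 0
    then show ?case using I g0 by force
  next
    case (Suc n)
    show ?case
    proof (intro ballI impI)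
      fix t assume t: "t \<in> I" "t \<le> real (Suc n) * \<delta>"
      show "g t = 0"
      proof (cases "t \<le> real n * \<delta>")
        case True then show ?thesis using Suc t by auto
      next
        case False
        have n0: "0 \<le> real n * \<delta>" using \<delta> by auto
        have nI: "real n * \<delta> \<in> I" using memI[OF I t(1) n0] False by auto
        have "g (real n * \<delta>) = 0" using Suc nI by auto
        then show ?thesis
          using key[of "real n * \<delta>" t] n0 False t by (auto simp: algebra_simps)
      qed
    qed
  qed
  show ?thesis
  proof
    fix t assume t: "t \<in> I"
    obtain n where "t / \<delta> < real n" using reals_Archimedean2 by blast
    then have "t \<le> real n * \<delta>" using \<delta> by (simp add: field_simps)
    then show "g t = 0" using ind t by blast
  qed
qed

lemma pos_pres:
  fixes g \<phi> :: "real \<Rightarrow> real"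
  assumes I: "\<forall>t\<in>I. 0 \<le> t \<and> {0..t} \<subseteq> I"
    and int: "\<forall>t\<in>I. (\<phi> has_integral (g t - g 0)) {0..t}"
    and g0: "g 0 > 0"
    and bnd: "\<forall>s\<in>I. \<phi> s \<le> 0 \<and> - \<phi> s \<le> K * g s" and K: "K \<ge> 0"
  shows "\<forall>t\<in>I. g t > 0"
proof -
  define \<delta> where "\<delta> = 1 / (2*K + 2)"
  have \<delta>: "\<delta> > 0" "K * \<delta> \<le> 1/2" using K by (auto simp: \<delta>_def field_simps)
  have mono: "g t2 \<le> g t1" if "0 \<le> t1" "t1 \<le> t2" "t2 \<in> I" for t1 t2
  proof -
    have h: "((\<lambda>s. - \<phi> s) has_integral - (g t2 - g t1)) {t1..t2}"
      using has_integral_neg[OF step_int[OF I int that]] .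
    have "0 \<le> - (g t2 - g t1)"
      by (rule has_integral_nonneg[OF h]) (use bnd memI[OF I] that in \<open>auto simp: Ball_def\<close>)
    then show ?thesis by simp
  qed
  have key: "g t2 > 0" if "0 \<le> t1" "t1 \<le> t2" "t2 \<in> I" "g t1 > 0" "t2 - t1 \<le> \<delta>" for t1 t2
  proof -
    have h: "((\<lambda>s. - \<phi> s) has_integral - (g t2 - g t1)) {t1..t2}"
      using has_integral_neg[OF step_int[OF I int that(1-3)]] .
    have c: "((\<lambda>s. K * g t1) has_integral ((t2 - t1) * (K * g t1))) {t1..t2}" using has_integral_const_real[of "K * g t1" t1 t2] that by simp
    have "- (g t2 - g t1) \<le> (t2 - t1) * (K * g t1)"
    proof (rule has_integral_le[OF h c])
      fix s assume s: "s \<in> {t1..t2}"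
      then have "s \<in> I" using memI[OF I, of t2 s] that by auto
      then have "- \<phi> s \<le> K * g s" using bnd by auto
      also have "\<dots> \<le> K * g t1" using mono[of t1 s] s that K \<open>s \<in> I\<close> by (auto intro: mult_left_mono)
      finally show "- \<phi> s \<le> K * g t1" .
    qed
    then have le: "g t1 - g t2 \<le> (t2 - t1) * K * g t1" using that by simp
    have "(t2 - t1) * K * g t1 \<le> \<delta> * K * g t1"
      using that K by (intro mult_right_mono) auto
    also have "\<dots> \<le> 1/2 * g t1" using \<delta> that by (intro mult_right_mono) (auto simp: mult.commute)
    finally show ?thesis using le that by linarith
  qed
  have ind: "\<forall>t\<in>I. t \<le> real n * \<delta> \<longrightarrow> g t > 0" for n
  proof (induction n)
    case 0
    then show ?case using I g0 by force
  next
    case (Suc n)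
    show ?case
    proof (intro ballI impI)
      fix t assume t: "t \<in> I" "t \<le> real (Suc n) * \<delta>"
      show "g t > 0"
      proof (cases "t \<le> real n * \<delta>")
        case True then show ?thesis using Suc t by auto
      next
        case False
        have n0: "0 \<le> real n * \<delta>" using \<delta> by auto
        have nI: "real n * \<delta> \<in> I" using memI[OF I t(1) n0] False by auto
        have "g (real n * \<delta>) > 0" using Suc nI by auto
        then show ?thesis
          using key[of "real n * \<delta>" t] n0 False t by (auto simp: algebra_simps)
      qed
    qed
  qed
  show ?thesis
  proof
    fix t assume t: "t \<in> I"
    obtain n where "t / \<delta> < real n" using reals_Archimedean2 by blast
    then have "t \<le> real n * \<delta>" using \<delta> by (simp add: field_simps)
    then show "g t > 0" using ind t by blast
  qed
qed


lemma vertex_bound: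
  fixes V :: "(real^'n) set"
  assumes V: "finite V"
    and d0: "\<forall>x\<in>convex hull V. 0 \<le> q \<bullet> x + q0"
    and z: "\<forall>x\<in>convex hull V. q \<bullet> x + q0 = 0 \<longrightarrow> p \<bullet> x + p0 \<le> 0"
  shows "\<exists>K\<ge>0. \<forall>y\<in>convex hull V. p \<bullet> y + p0 \<le> K * (q \<bullet> y + q0)"
proof -
  define f where "f x = p \<bullet> x + p0" for x
  define d where "d x = q \<bullet> x + q0" for x
  define K where "K = (\<Sum>v\<in>V. \<bar>f v\<bar> / d v)"
  have VP: "V \<subseteq> convex hull V" by (rule hull_subset)
  have dv: "0 \<le> d v" if "v \<in> V" for v using d0 VP that by (auto simp: d_def)
  have K0: "K \<ge> 0" unfolding K_def using dv by (auto intro: sum_nonneg)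
  have fv: "f v \<le> K * d v" if v: "v \<in> V" for v
  proof (cases "d v = 0")
    case True then show ?thesis using z VP v by (auto simp: f_def d_def)
  next
    case False
    then have dp: "d v > 0" using dv v by force
    have "\<bar>f v\<bar> / d v \<le> K" unfolding K_def
      by (rule member_le_sum[OF v]) (use dv V in auto)
    then have "\<bar>f v\<bar> \<le> K * d v" using dp by (simp add: field_simps)
    then show ?thesis by linarith
  qed
  have "\<forall>y\<in>convex hull V. f y \<le> K * d y"
  proof
    fix y assume "y \<in> convex hull V"
    then obtain u where u: "\<forall>x\<in>V. 0 \<le> u x" "sum u V = 1" "(\<Sum>x\<in>V. u x *\<^sub>R x) = y"
      using convex_hull_finite[OF V] by auto
    have aff: "h \<bullet> y + h0 = (\<Sum>v\<in>V. u v * (h \<bullet> v + h0))" for h :: "real^'n" and h0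
    proof -
      have "h \<bullet> y + h0 = (\<Sum>v\<in>V. u v * (h \<bullet> v)) + (\<Sum>v\<in>V. u v) * h0"
        using u(2) by (simp add: u(3)[symmetric] inner_sum_right)
      also have "\<dots> = (\<Sum>v\<in>V. u v * (h \<bullet> v + h0))"
        by (simp add: sum_distrib_right sum_distrib_left sum.distrib algebra_simps)
      finally show ?thesis .
    qed
    have "f y = (\<Sum>v\<in>V. u v * f v)" using aff by (simp add: f_def)
    also have "\<dots> \<le> (\<Sum>v\<in>V. u v * (K * d v))"
      using fv u by (intro sum_mono mult_left_mono) auto
    also have "\<dots> = K * (\<Sum>v\<in>V. u v * d v)" by (simp add: sum_distrib_left algebra_simps)
    also have "(\<Sum>v\<in>V. u v * d v) = d y" using aff by (simp add: d_def)
    finally show "f y \<le> K * d y" .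
  qed
  then show ?thesis using K0 by (auto simp: f_def d_def)
qed

lemma cross:
  fixes P :: "(real^'n) set"
  assumes "convex P" "y \<in> interior P" "p \<in> P" "(\<beta> \<bullet> y - c) * (\<beta> \<bullet> p - c) < 0"
  shows "\<exists>w\<in>interior P. \<beta> \<bullet> w = c"
proof -
  define t where "t = (c - \<beta> \<bullet> y) / (\<beta> \<bullet> p - \<beta> \<bullet> y)"
  have ne: "\<beta> \<bullet> p \<noteq> \<beta> \<bullet> y" using assms(4) by auto
  have t: "0 < t" "t < 1"
    using assms(4) unfolding t_def
    by (auto simp: divide_simps mult_less_0_iff split: if_splits)
  define w where "w = (1 - t) *\<^sub>R y + t *\<^sub>R p"
  have "\<beta> \<bullet> w = \<beta> \<bullet> y + t * (\<beta> \<bullet> p - \<beta> \<bullet> y)"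
    by (simp add: w_def inner_add_right algebra_simps)
  also have "\<dots> = c" using ne by (simp add: t_def)
  finally have wc: "\<beta> \<bullet> w = c" .
  have "y \<noteq> p" using ne by auto
  then have "w \<in> open_segment y p" using t by (auto simp: in_segment w_def)
  moreover have "open_segment y p \<subseteq> interior P"
    using in_interior_closure_convex_segment[OF assms(1,2)] assms(3) closure_subset by blast
  ultimately show ?thesis using wc by blast
qed

lemma traj_beta:
  assumes "is_traj A a B u x0 x I" "\<forall>y. \<beta> \<bullet> (B *v y) = 0" "t \<in> I"
  shows "((\<lambda>s. \<beta> \<bullet> (A *v x s + a)) has_integral (\<beta> \<bullet> x t - \<beta> \<bullet> x0)) {0..t}"
proof -
  have "((\<lambda>s. A *v x s + a + B *v u s) has_integral (x t - x0)) {0..t}"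
    using assms unfolding is_traj_def by auto
  from has_integral_linear[OF this bounded_linear_inner_right[of \<beta>]]
  have "((\<lambda>s. \<beta> \<bullet> (A *v x s + a + B *v u s)) has_integral \<beta> \<bullet> (x t - x0)) {0..t}"
    by (simp add: o_def)
  moreover have "\<beta> \<bullet> (A *v x s + a + B *v u s) = \<beta> \<bullet> (A *v x s + a)" for s
    using assms(2) by (simp add: inner_add_right)
  ultimately show ?thesis by (simp add: inner_diff_right)
qed


lemma inv_core:
  fixes x :: "real \<Rightarrow> real^'n" and L :: "real^'n \<Rightarrow> real"
  assumes I: "\<forall>t\<in>I. 0 \<le> t \<and> {0..t} \<subseteq> I" and I0: "0 \<in> I"
    and x0: "x 0 = x0"
    and int: "\<forall>t\<in>I. ((\<lambda>s. L (x s)) has_integral (\<beta> \<bullet> x t - \<beta> \<bullet> x0)) {0..t}"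
    and inP: "\<forall>t\<in>I. x t \<in> P"
    and Lneg: "\<forall>y\<in>P. L y \<le> 0" and K: "K \<ge> 0"
    and side: "(\<forall>y\<in>P. \<beta> \<bullet> y \<le> c \<and> - L y \<le> K * (c - \<beta> \<bullet> y))
             \<or> (\<forall>y\<in>P. c \<le> \<beta> \<bullet> y \<and> - L y \<le> K * (\<beta> \<bullet> y - c))"
  shows "(x0 \<in> {y. \<beta> \<bullet> y = c} \<inter> P \<longrightarrow> (\<forall>t\<in>I. x t \<in> {y. \<beta> \<bullet> y = c} \<inter> P))
       \<and> (x0 \<in> P - {y. \<beta> \<bullet> y = c} \<longrightarrow> (\<forall>t\<in>I. x t \<in> P - {y. \<beta> \<bullet> y = c}))"
proof -
  have dec: "\<beta> \<bullet> x t \<le> \<beta> \<bullet> x0" if t: "t \<in> I" for t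
  proof -
    have h: "((\<lambda>s. - L (x s)) has_integral - (\<beta> \<bullet> x t - \<beta> \<bullet> x0)) {0..t}"
      using has_integral_neg[OF int[rule_format, OF t]] .
    have "0 \<le> - (\<beta> \<bullet> x t - \<beta> \<bullet> x0)"
    proof (rule has_integral_nonneg[OF h])
      fix s assume "s \<in> {0..t}"
      then have "s \<in> I" using memI[OF I t] by auto
      then show "0 \<le> - L (x s)" using Lneg inP by force
    qed
    then show ?thesis by simp
  qed
  have c1: "\<forall>t\<in>I. \<beta> \<bullet> x t = c" if h0: "\<beta> \<bullet> x0 = c" "x0 \<in> P"
    using side
  proof
    assume s: "\<forall>y\<in>P. \<beta> \<bullet> y \<le> c \<and> - L y \<le> K * (c - \<beta> \<bullet> y)"
    have "\<forall>t\<in>I. (\<lambda>t. c - \<beta> \<bullet> x t) t = 0"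
    proof (rule zero_pres[OF I _ _ _ K, where \<phi>="\<lambda>s. - L (x s)"])
      show "\<forall>t\<in>I. ((\<lambda>s. - L (x s)) has_integral ((\<lambda>t. c - \<beta> \<bullet> x t) t - (\<lambda>t. c - \<beta> \<bullet> x t) 0)) {0..t}"
      proof
        fix t assume t: "t \<in> I"
        from has_integral_neg[OF int[rule_format, OF t]]
        show "((\<lambda>s. - L (x s)) has_integral ((\<lambda>t. c - \<beta> \<bullet> x t) t - (\<lambda>t. c - \<beta> \<bullet> x t) 0)) {0..t}"
          using x0 by simp
      qed
      show "(\<lambda>t. c - \<beta> \<bullet> x t) 0 = 0" using x0 h0 by simp
      show "\<forall>s\<in>I. 0 \<le> - L (x s) \<and> - L (x s) \<le> K * (\<lambda>t. c - \<beta> \<bullet> x t) s"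
        using s Lneg inP by force
    qed
    then show ?thesis by simp
  next
    assume s: "\<forall>y\<in>P. c \<le> \<beta> \<bullet> y \<and> - L y \<le> K * (\<beta> \<bullet> y - c)"
    show ?thesis using dec s inP h0 by force
  qed
  have c2: "\<forall>t\<in>I. \<beta> \<bullet> x t \<noteq> c" if h0: "\<beta> \<bullet> x0 \<noteq> c" "x0 \<in> P"
    using side
  proof
    assume s: "\<forall>y\<in>P. \<beta> \<bullet> y \<le> c \<and> - L y \<le> K * (c - \<beta> \<bullet> y)"
    then have "\<beta> \<bullet> x0 < c" using h0 by force
    then show ?thesis using dec by force
  next
    assume s: "\<forall>y\<in>P. c \<le> \<beta> \<bullet> y \<and> - L y \<le> K * (\<beta> \<bullet> y - c)"
    have "\<forall>t\<in>I. (\<lambda>t. \<beta> \<bullet> x t - c) t > 0"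
    proof (rule pos_pres[OF I _ _ _ K, where \<phi>="\<lambda>s. L (x s)"])
      show "\<forall>t\<in>I. ((\<lambda>s. L (x s)) has_integral ((\<lambda>t. \<beta> \<bullet> x t - c) t - (\<lambda>t. \<beta> \<bullet> x t - c) 0)) {0..t}"
        using int x0 by auto
      show "(\<lambda>t. \<beta> \<bullet> x t - c) 0 > 0" using x0 h0 s by force
      show "\<forall>s\<in>I. L (x s) \<le> 0 \<and> - L (x s) \<le> K * (\<lambda>t. \<beta> \<bullet> x t - c) s"
        using s Lneg inP by force
    qed
    then show ?thesis by force
  qed
  show ?thesis using c1 c2 inP by blast
qed

theorem lemma4:
  fixes P :: "(real^'n) set" and A :: "real^'n^'n" and a :: "real^'n"
    and B :: "real^'m^'n" and \<beta> z :: "real^'n"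
  assumes "polytope P" and "aff_dim P = int CARD('n)"
    and "rank B = CARD('n) - 1"
    and "controllable A B"
    and "interior P \<inter> {x. A *v x + a \<in> range ((*v) B)} = {}"
    and "norm \<beta> = 1" and "\<forall>y. \<beta> \<bullet> (B *v y) = 0"
    and "\<forall>x\<in>P. \<beta> \<bullet> (A *v x + a) \<le> 0"
    and "z \<in> P"
    and "{x. \<beta> \<bullet> x = \<beta> \<bullet> z} \<inter> P \<subseteq> {x. A *v x + a \<in> range ((*v) B)}"
  shows "P_invariant A a B P ({x. \<beta> \<bullet> x = \<beta> \<bullet> z} \<inter> P)
       \<and> P_invariant A a B P (P - {x. \<beta> \<bullet> x = \<beta> \<bullet> z})"
proof -
  define c where "c = \<beta> \<bullet> z"
  define L where "L x = \<beta> \<bullet> (A *v x + a)" for x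
  have Leq: "L x = (\<beta> v* A) \<bullet> x + \<beta> \<bullet> a" for x
    by (simp add: L_def inner_add_right dot_lmul_matrix)
  obtain V where V: "finite V" "P = convex hull V" using assms(1) unfolding polytope_def by blast
  have cvx: "convex P" using V by simp
  have hO: "L x = 0" if "x \<in> P" "\<beta> \<bullet> x = c" for x
  proof -
    have "A *v x + a \<in> range ((*v) B)" using assms(10) that c_def by blast
    then obtain y where "A *v x + a = B *v y" by blast
    then show ?thesis using assms(7) by (simp add: L_def)
  qed
  have Lneg: "\<forall>y\<in>P. L y \<le> 0" using assms(8) by (simp add: L_def)
  have ri: "rel_interior P \<noteq> {}" using rel_interior_eq_empty[OF cvx] assms(9) by auto
  have intP: "interior P \<noteq> {}"
    using ri interior_rel_interior_gen[of P] assms(2) by simp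
  have noint: "\<beta> \<bullet> w \<noteq> c" if "w \<in> interior P" for w
  proof
    assume "\<beta> \<bullet> w = c"
    then have "w \<in> {x. A *v x + a \<in> range ((*v) B)}"
      using assms(10) that interior_subset c_def by blast
    then show False using assms(5) that by blast
  qed
  have side0: "(\<forall>x\<in>P. \<beta> \<bullet> x \<le> c) \<or> (\<forall>x\<in>P. c \<le> \<beta> \<bullet> x)"
  proof (rule ccontr)
    assume "\<not> ?thesis"
    then obtain p q where pq: "p \<in> P" "q \<in> P" "\<beta> \<bullet> p > c" "\<beta> \<bullet> q < c"
      by (auto simp: not_le)
    obtain y where y: "y \<in> interior P" using intP by blast
    have "\<beta> \<bullet> y < c \<or> \<beta> \<bullet> y > c" using noint[OF y] by linarith
    then show False
    proof
      assume "\<beta> \<bullet> y < c"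
      then have "(\<beta> \<bullet> y - c) * (\<beta> \<bullet> p - c) < 0" using pq by (simp add: mult_less_0_iff)
      then show False using cross[OF cvx y pq(1)] noint by blast
    next
      assume "\<beta> \<bullet> y > c"
      then have "(\<beta> \<bullet> y - c) * (\<beta> \<bullet> q - c) < 0" using pq by (simp add: mult_less_0_iff)
      then show False using cross[OF cvx y pq(2)] noint by blast
    qed
  qed
  obtain K where K: "K \<ge> 0" and side:
    "(\<forall>y\<in>P. \<beta> \<bullet> y \<le> c \<and> - L y \<le> K * (c - \<beta> \<bullet> y))
       \<or> (\<forall>y\<in>P. c \<le> \<beta> \<bullet> y \<and> - L y \<le> K * (\<beta> \<bullet> y - c))"
    using side0
  proof
    assume s: "\<forall>x\<in>P. \<beta> \<bullet> x \<le> c"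
    have "\<exists>K\<ge>0. \<forall>y\<in>convex hull V. (- (\<beta> v* A)) \<bullet> y + (- (\<beta> \<bullet> a)) \<le> K * ((- \<beta>) \<bullet> y + c)"
    proof (rule vertex_bound[OF V(1)])
      show "\<forall>x\<in>convex hull V. 0 \<le> (- \<beta>) \<bullet> x + c" using s V(2) by auto
      show "\<forall>x\<in>convex hull V. (- \<beta>) \<bullet> x + c = 0 \<longrightarrow> (- (\<beta> v* A)) \<bullet> x + (- (\<beta> \<bullet> a)) \<le> 0"
      proof (intro ballI impI)
        fix x assume x: "x \<in> convex hull V" "(- \<beta>) \<bullet> x + c = 0"
        then have "\<beta> \<bullet> x = c" by simp
        then have "L x = 0" using hO x V(2) by blast
        then show "(- (\<beta> v* A)) \<bullet> x + (- (\<beta> \<bullet> a)) \<le> 0" by (simp add: Leq)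
      qed
    qed
    then obtain K where "K \<ge> 0" "\<forall>y\<in>P. - L y \<le> K * (c - \<beta> \<bullet> y)"
      using V(2) by (auto simp: Leq)
    then show ?thesis using that s by blast
  next
    assume s: "\<forall>x\<in>P. c \<le> \<beta> \<bullet> x"
    have "\<exists>K\<ge>0. \<forall>y\<in>convex hull V. (- (\<beta> v* A)) \<bullet> y + (- (\<beta> \<bullet> a)) \<le> K * (\<beta> \<bullet> y + (- c))"
    proof (rule vertex_bound[OF V(1)])
      show "\<forall>x\<in>convex hull V. 0 \<le> \<beta> \<bullet> x + (- c)" using s V(2) by auto
      show "\<forall>x\<in>convex hull V. \<beta> \<bullet> x + (- c) = 0 \<longrightarrow> (- (\<beta> v* A)) \<bullet> x + (- (\<beta> \<bullet> a)) \<le> 0"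
      proof (intro ballI impI)
        fix x assume x: "x \<in> convex hull V" "\<beta> \<bullet> x + (- c) = 0"
        then have "\<beta> \<bullet> x = c" by simp
        then have "L x = 0" using hO x V(2) by blast
        then show "(- (\<beta> v* A)) \<bullet> x + (- (\<beta> \<bullet> a)) \<le> 0" by (simp add: Leq)
      qed
    qed
    then obtain K where "K \<ge> 0" "\<forall>y\<in>P. - L y \<le> K * (\<beta> \<bullet> y - c)"
      using V(2) by (auto simp: Leq)
    then show ?thesis using that s by blast
  qed
  have core: "(x0 \<in> {y. \<beta> \<bullet> y = c} \<inter> P \<longrightarrow> (\<forall>t\<in>I. x t \<in> {y. \<beta> \<bullet> y = c} \<inter> P))
       \<and> (x0 \<in> P - {y. \<beta> \<bullet> y = c} \<longrightarrow> (\<forall>t\<in>I. x t \<in> P - {y. \<beta> \<bullet> y = c}))"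
    if I: "\<forall>t\<in>I. 0 \<le> t \<and> {0..t} \<subseteq> I" "0 \<in> I" and tr: "is_traj A a B u x0 x I"
      and inP: "\<forall>t\<in>I. x t \<in> P" for I u x0 x
  proof (rule inv_core[OF I _ _ inP Lneg K side])
    show "x 0 = x0" using tr by (simp add: is_traj_def)
    show "\<forall>t\<in>I. ((\<lambda>s. L (x s)) has_integral \<beta> \<bullet> x t - \<beta> \<bullet> x0) {0..t}"
      using traj_beta[OF tr assms(7)] by (simp add: L_def)
  qed
  have gen: "P_invariant A a B P Q"
    if Qsub: "Q \<subseteq> P" and cQ: "\<And>I u x0 x. \<forall>t\<in>I. 0 \<le> t \<and> {0..t} \<subseteq> I \<Longrightarrow> 0 \<in> I
        \<Longrightarrow> is_traj A a B u x0 x I \<Longrightarrow> \<forall>t\<in>I. x t \<in> P \<Longrightarrow> x0 \<in> Q \<Longrightarrow> \<forall>t\<in>I. x t \<in> Q" for Q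
    unfolding P_invariant_def
  proof (intro conjI Qsub ballI allI impI)
    fix x0 u and x :: "real \<Rightarrow> real^'n" and T t :: real
    assume x0: "x0 \<in> Q" and pc: "piecewise_continuous u"
      and h: "0 \<le> T \<and> is_traj A a B u x0 x {0..T} \<and> (\<forall>t\<in>{0..T}. x t \<in> P)"
      and t: "t \<in> {0..T}"
    have I1: "\<forall>t\<in>{0..T}. 0 \<le> t \<and> {0..t} \<subseteq> {0..T}" "(0::real) \<in> {0..T}" using h by auto
    show "x t \<in> Q" using cQ[OF I1] h x0 t by blast
  next
    fix x0 u and x :: "real \<Rightarrow> real^'n" and t :: real
    assume x0: "x0 \<in> Q" and pc: "piecewise_continuous u"
      and h: "is_traj A a B u x0 x {0..} \<and> (\<forall>t\<in>{0..}. x t \<in> P)"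
      and t: "t \<in> {0..}"
    have I2: "\<forall>t\<in>{0::real..}. 0 \<le> t \<and> {0..t} \<subseteq> {0..}" "(0::real) \<in> {0..}" by auto
    show "x t \<in> Q" using cQ[OF I2] h x0 t by blast
  qed
  have "P_invariant A a B P ({y. \<beta> \<bullet> y = c} \<inter> P)"
    by (rule gen) (use core in blast)+
  moreover have "P_invariant A a B P (P - {y. \<beta> \<bullet> y = c})"
    by (rule gen) (use core in blast)+
  ultimately show ?thesis by (simp add: c_def)
qed

end
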